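(* Let $P,Q\in\mathbb P_d$ and $R=\big((1-t)P+tQ\big)^{-1}$ for some $t\in[0,1]$. Then $\operatorname{F}_R(P,Q)=\operatorname{F}^{\mathrm M}(P,Q)$.
   Context: $\mathbb P_d$ is the set of $d\times d$ complex positive definite matrices; $A\#B:=A^{1/2}(A^{-1/2}BA^{-1/2})^{1/2}A^{1/2}$. The generalized fidelity is $\operatorname{F}_R(P,Q):=\operatorname{Tr}\big[\sqrt{R^{1/2}PR^{1/2}}\,R^{-1}\sqrt{R^{1/2}QR^{1/2}}\big]$, and the Matsumoto fidelity is $\operatorname{F}^{\mathrm M}(P,Q):=\operatorname{Tr}[P\#Q]$. *)

theory Defs
  imports "HOL-Analysis.Analysis"
begin

text \<open>Complex d x d matrices are modelled as complex^'n^'n for a finite index type 'n (d = CARD('n)).\<close>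

definition cadjoint :: "complex^'n^'m \<Rightarrow> complex^'m^'n" where
  "cadjoint A = (\<chi> i j. cnj (A $ j $ i))"

definition qform :: "complex^'n^'n \<Rightarrow> complex^'n \<Rightarrow> complex" where
  "qform A x = (\<Sum>i\<in>UNIV. cnj (x $ i) * (A *v x) $ i)"

definition pos_def :: "complex^'n^'n \<Rightarrow> bool" where
  "pos_def A \<longleftrightarrow> cadjoint A = A \<and>
     (\<forall>x. x \<noteq> 0 \<longrightarrow> Im (qform A x) = 0 \<and> Re (qform A x) > 0)"

definition pos_semidef :: "complex^'n^'n \<Rightarrow> bool" where
  "pos_semidef A \<longleftrightarrow> cadjoint A = A \<and>
     (\<forall>x. Im (qform A x) = 0 \<and> Re (qform A x) \<ge> 0)"

definition msqrt :: "complex^'n^'n \<Rightarrow> complex^'n^'n" where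
  "msqrt A = (THE B. pos_semidef B \<and> B ** B = A)"

definition mgeo :: "complex^'n^'n \<Rightarrow> complex^'n^'n \<Rightarrow> complex^'n^'n" where
  "mgeo A B = msqrt A ** msqrt (matrix_inv (msqrt A) ** B ** matrix_inv (msqrt A)) ** msqrt A"

definition gen_fidelity :: "complex^'n^'n \<Rightarrow> complex^'n^'n \<Rightarrow> complex^'n^'n \<Rightarrow> complex" where
  "gen_fidelity R P Q = trace (msqrt (msqrt R ** P ** msqrt R) ** matrix_inv R **
                               msqrt (msqrt R ** Q ** msqrt R))"

definition matsumoto_fidelity :: "complex^'n^'n \<Rightarrow> complex^'n^'n \<Rightarrow> complex" where
  "matsumoto_fidelity P Q = trace (mgeo P Q)"

end

theory Submission
  imports Defs
begin

definition cinner :: "complex^'n \<Rightarrow> complex^'n \<Rightarrow> complex" where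
  "cinner x y = (\<Sum>i\<in>UNIV. cnj (x$i) * y$i)"

definition diagm :: "('n \<Rightarrow> real) \<Rightarrow> complex^'n^'n" where
  "diagm d = (\<chi> i j. if i = j then complex_of_real (d i) else 0)"

lemma scaleR_nth_c[simp]: "((c::real) *\<^sub>R (x::complex^'n)) $ i = complex_of_real c * x$i"
  by (simp only: vector_scaleR_component) (simp add: scaleR_conv_of_real)

lemma scaleR_nth2_c[simp]: "((c::real) *\<^sub>R (A::complex^'n^'m)) $ i $ j = complex_of_real c * A$i$j"
  by (simp only: vector_scaleR_component) (simp add: scaleR_conv_of_real)

lemma cnj_mult_self: "cnj z * z = (complex_of_real (cmod z))^2"
  by (subst mult.commute) (simp add: complex_norm_square[symmetric])

lemma qform_cinner: "qform A x = cinner x (A *v x)"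
  by (simp add: qform_def cinner_def)

lemma cadjoint_nth[simp]: "cadjoint A $ i $ j = cnj (A $ j $ i)"
  by (simp add: cadjoint_def)

lemma cadjoint_cadjoint[simp]: "cadjoint (cadjoint A) = A"
  by (simp add: vec_eq_iff)

lemma cadjoint_mult: "cadjoint (A ** B) = cadjoint B ** cadjoint (A::complex^'n^'m)"
  by (simp add: vec_eq_iff matrix_matrix_mult_def mult.commute)

lemma cadjoint_mat1[simp]: "cadjoint (mat 1 :: complex^'n^'n) = mat 1"
  by (simp add: vec_eq_iff mat_def)

lemma cadjoint_add: "cadjoint (A + B) = cadjoint A + cadjoint (B::complex^'n^'m)"
  by (simp add: vec_eq_iff)

lemma cadjoint_diff: "cadjoint (A - B) = cadjoint A - cadjoint (B::complex^'n^'m)"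
  by (simp add: vec_eq_iff)

lemma cadjoint_scaleR: "cadjoint (c *\<^sub>R A) = c *\<^sub>R cadjoint (A::complex^'n^'m)"
  by (simp add: vec_eq_iff del: vector_scaleR_component)

lemma cadjoint_diagm[simp]: "cadjoint (diagm d) = diagm d"
  by (simp add: vec_eq_iff diagm_def)

lemma cadjoint_0[simp]: "cadjoint 0 = 0"
  by (simp add: vec_eq_iff)

lemma cinner_adj: "cinner x (A *v y) = cinner (cadjoint A *v x) y"
proof -
  have "cinner x (A *v y) = (\<Sum>i\<in>UNIV. \<Sum>j\<in>UNIV. cnj (x$i) * (A$i$j * y$j))"
    by (simp add: cinner_def matrix_vector_mult_def sum_distrib_left)
  also have "\<dots> = (\<Sum>j\<in>UNIV. \<Sum>i\<in>UNIV. cnj (x$i) * (A$i$j * y$j))"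
    by (rule sum.swap)
  also have "\<dots> = cinner (cadjoint A *v x) y"
    unfolding cinner_def matrix_vector_mult_def cadjoint_def
    by (simp add: cnj_sum sum_distrib_left mult_ac)
  finally show ?thesis .
qed

lemma cinner_commute: "cinner y x = cnj (cinner x y)"
  by (simp add: cinner_def cnj_sum mult.commute)

lemma cinner_add_right: "cinner x (y + z) = cinner x y + cinner x z"
  by (simp add: cinner_def distrib_left sum.distrib)
lemma cinner_add_left: "cinner (x + y) z = cinner x z + cinner y z"
  by (simp add: cinner_def distrib_right sum.distrib)
lemma cinner_diff_right: "cinner x (y - z) = cinner x y - cinner x z"
  by (simp add: cinner_def right_diff_distrib sum_subtractf)
lemma cinner_diff_left: "cinner (x - y) z = cinner x z - cinner y z"
  by (simp add: cinner_def left_diff_distrib sum_subtractf)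
lemma cinner_scale_right: "cinner x (c *s y) = c * cinner x y"
  by (simp add: cinner_def sum_distrib_left mult_ac)
lemma cinner_scale_left: "cinner (c *s x) y = cnj c * cinner x y"
  by (simp add: cinner_def sum_distrib_left mult_ac)
lemma cinner_scaleR_right: "cinner x (c *\<^sub>R y) = of_real c * cinner x y"
  unfolding cinner_def sum_distrib_left
  by (intro sum.cong refl) (simp add: mult_ac del: vector_scaleR_component)
lemma cinner_scaleR_left: "cinner (c *\<^sub>R x) y = of_real c * cinner x y"
  unfolding cinner_def sum_distrib_left
  by (intro sum.cong refl) (simp add: mult_ac del: vector_scaleR_component)
lemma cinner_zero_right[simp]: "cinner x 0 = 0"
  by (simp add: cinner_def)
lemma cinner_zero_left[simp]: "cinner 0 x = 0"
  by (simp add: cinner_def)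

lemma cinner_self: "cinner x x = complex_of_real ((norm x)^2)"
proof -
  have "cinner x x = (\<Sum>i\<in>UNIV. complex_of_real ((norm (x$i))^2))"
    unfolding cinner_def by (intro sum.cong refl) (simp add: cnj_mult_self)
  also have "\<dots> = complex_of_real (\<Sum>i\<in>UNIV. (norm (x$i))^2)" by simp
  also have "(\<Sum>i\<in>UNIV. (norm (x$i))^2) = (norm x)^2"
    by (simp add: norm_vec_def L2_set_def sum_nonneg)
  finally show ?thesis .
qed

lemma cinner_self_eq_0[simp]: "cinner x x = 0 \<longleftrightarrow> x = 0"
  by (simp add: cinner_self)

lemma Re_cinner_self: "Re (cinner x x) = (norm x)^2"
  by (simp add: cinner_self)

lemma Im_cinner_self[simp]: "Im (cinner x x) = 0"
  by (simp add: cinner_self)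

lemma herm_cinner: "cadjoint A = A \<Longrightarrow> cinner x (A *v y) = cinner (A *v x) y"
  by (metis cinner_adj)

lemma herm_qform_real: "cadjoint A = A \<Longrightarrow> Im (qform A x) = 0"
proof -
  assume h: "cadjoint A = A"
  have "qform A x = cnj (qform A x)"
    unfolding qform_cinner using herm_cinner[OF h, of x x] cinner_commute[of x "A *v x"] by simp
  then show ?thesis by (metis cnj.simps(2) neg_equal_zero)
qed

lemma var_lemma:
  assumes herm: "cadjoint B = B"
    and nn: "\<And>s::complex. Re (qform B (v + s *s w)) \<ge> 0"
    and z0: "Re (qform B v) = 0"
  shows "cinner w (B *v v) = 0"
proof -
  define z where "z = cinner w (B *v v)"
  define c where "c = Re (cinner w (B *v w))"
  have cvw: "cinner v (B *v w) = cnj z"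
    unfolding z_def using herm_cinner[OF herm, of v w] cinner_commute[of "B *v v" w] by simp
  have exp: "Re (qform B (v + s *s w)) = 2 * Re (cnj s * z) + (cmod s)^2 * c" for s
  proof -
    have "qform B (v + s *s w) = cinner v (B *v v) + s * cinner v (B *v w)
       + cnj s * cinner w (B *v v) + cnj s * s * cinner w (B *v w)"
      unfolding qform_cinner
      by (simp add: matrix_vector_right_distrib vector_scalar_commute cinner_add_left
          cinner_add_right cinner_scale_left cinner_scale_right algebra_simps)
    also have "\<dots> = qform B v + s * cnj z + cnj s * z + cnj s * s * cinner w (B *v w)"
      by (simp add: qform_cinner cvw z_def)
    finally have "Re (qform B (v + s *s w)) = Re (s * cnj z) + Re (cnj s * z) + Re (cnj s * s) * c"
      using z0 by (simp add: c_def)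
    moreover have "Re (s * cnj z) = Re (cnj s * z)"
      by (metis complex_cnj_cnj complex_cnj_mult cnj.simps(1))
    moreover have "Re (cnj s * s) = (cmod s)^2"
      by (simp add: cnj_mult_self)
    ultimately show ?thesis by simp
  qed
  define e where "e = 1 / (\<bar>c\<bar> + 1)"
  have e0: "e > 0" unfolding e_def by simp
  have ec: "e * c < 1"
  proof -
    have "e * c \<le> e * \<bar>c\<bar>" using e0 by (simp add: mult_left_mono)
    also have "\<dots> < 1" unfolding e_def by (simp add: field_simps)
    finally show ?thesis .
  qed
  define s where "s = - (complex_of_real e * z)"
  have "Re (cnj s * z) = - e * ((Re z)^2 + (Im z)^2)"
    unfolding s_def by (simp add: power2_eq_square algebra_simps)
  hence "Re (cnj s * z) = - e * (cmod z)^2" by (simp add: cmod_power2)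
  moreover have "(cmod s)^2 = e^2 * (cmod z)^2"
    unfolding s_def using e0 by (simp add: norm_mult power_mult_distrib)
  ultimately have "0 \<le> 2 * (- e * (cmod z)^2) + e^2 * (cmod z)^2 * c"
    using nn[of s] exp[of s] by simp
  hence "0 \<le> e * ((cmod z)^2 * (e * c - 2))" by (simp add: algebra_simps power2_eq_square)
  hence "0 \<le> (cmod z)^2 * (e * c - 2)" using e0 by (simp add: zero_le_mult_iff)
  moreover have "e * c - 2 < 0" using ec by simp
  ultimately have "(cmod z)^2 \<le> 0" by (simp add: mult_le_0_iff zero_le_mult_iff)
  hence "z = 0" by simp
  thus ?thesis unfolding z_def .
qed

lemma psd_kernel:
  assumes "pos_semidef B" and "Re (qform B v) = 0"
  shows "B *v v = 0"
proof -
  have h: "cadjoint B = B" using assms(1) by (simp add: pos_semidef_def)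
  have "cinner (B *v v) (B *v v) = 0"
    by (rule var_lemma[OF h _ assms(2)]) (use assms(1) in \<open>simp add: pos_semidef_def\<close>)
  thus ?thesis by simp
qed

lemma scaleR_as_smult: "(c::real) *\<^sub>R (x::complex^'n) = complex_of_real c *s x"
  by (simp add: vec_eq_iff del: vector_scaleR_component)

lemma mat_mult_vec: "(mat c :: complex^'n^'n) *v x = c *s x"
  by (simp add: vec_eq_iff matrix_vector_mult_def mat_def if_distrib if_distribR cong: if_cong)

lemma cadjoint_mat_real: "cadjoint (mat (complex_of_real c) :: complex^'n^'n) = mat (complex_of_real c)"
  by (simp add: vec_eq_iff mat_def)

lemma qform_scaleR: "qform A (c *\<^sub>R x) = complex_of_real (c^2) * qform A x"
  unfolding qform_cinner scaleR_as_smult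
  by (simp add: vector_scalar_commute cinner_scale_left cinner_scale_right power2_eq_square)

lemma new_eigvec:
  fixes A :: "complex^'n^'n" and u :: "'n \<Rightarrow> complex^'n" and d :: "'n \<Rightarrow> real"
  assumes herm: "cadjoint A = A" and j0: "j0 \<notin> J"
    and eig: "\<And>i. i \<in> J \<Longrightarrow> A *v u i = complex_of_real (d i) *s u i"
  shows "\<exists>v l. cinner v v = 1 \<and> (\<forall>i\<in>J. cinner (u i) v = 0) \<and> A *v v = complex_of_real l *s v"
proof -
  define f where "f x = (\<chi> i. if i \<in> J then cinner (u i) x else 0)" for x :: "complex^'n"
  define W where "W = {x. \<forall>i\<in>J. cinner (u i) x = 0}"
  have W_f: "W = {x. f x = 0}" unfolding W_def f_def by (auto simp: vec_eq_iff)
  have lin: "linear f"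
  proof (rule linearI)
    show "f (x + y) = f x + f y" for x y by (simp add: f_def vec_eq_iff cinner_add_right)
    show "f (c *\<^sub>R x) = c *\<^sub>R f x" for c x
      unfolding f_def vec_eq_iff by (simp add: cinner_scaleR_right) (simp add: scaleR_conv_of_real)
  qed
  have nsurj: "\<not> surj f"
  proof
    assume "surj f"
    then obtain x where "f x = (\<chi> i. if i = j0 then 1 else 0)" by (metis surjD)
    hence "f x $ j0 = 1" by simp
    thus False using j0 by (simp add: f_def)
  qed
  hence "\<not> inj f" using linear_injective_imp_surjective[OF lin] by blast
  then obtain x y where xy: "x \<noteq> y" "f x = f y" unfolding inj_def by blast
  define x0 where "x0 = x - y"
  have x0: "x0 \<noteq> 0" "x0 \<in> W" using xy lin unfolding x0_def W_f by (auto simp: linear_diff)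
  have Wsc: "c *\<^sub>R w \<in> W" if "w \<in> W" for c w
    using that unfolding W_def by (simp add: cinner_scaleR_right)
  have Wadd: "w1 + w2 \<in> W" if "w1 \<in> W" "w2 \<in> W" for w1 w2
    using that unfolding W_def by (simp add: cinner_add_right)
  have Wsm: "c *s w \<in> W" if "w \<in> W" for c w
    using that unfolding W_def by (simp add: cinner_scale_right)
  have contf: "continuous_on UNIV f"
    using lin by (simp add: linear_continuous_on linear_conv_bounded_linear)
  have clW: "closed W" unfolding W_f
    by (rule closed_Collect_eq[OF contf continuous_on_const])
  define K where "K = W \<inter> sphere 0 1"
  have cK: "compact K" unfolding K_def using clW by (intro closed_Int_compact) auto
  have neK: "K \<noteq> {}"
  proof -
    have "(1 / norm x0) *\<^sub>R x0 \<in> K" using x0 Wsc unfolding K_def by auto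
    thus ?thesis by blast
  qed
  define g where "g x = Re (qform A x)" for x
  have contg: "continuous_on K g"
    unfolding g_def qform_def matrix_vector_mult_def
    by (intro continuous_intros)
  obtain v where vK: "v \<in> K" and vmax: "\<And>y. y \<in> K \<Longrightarrow> g y \<le> g v"
    using continuous_attains_sup[OF cK neK contg] by blast
  define l where "l = g v"
  have vW: "v \<in> W" and nv: "norm v = 1" using vK unfolding K_def by auto
  have bound: "Re (qform A x) \<le> l * (norm x)^2" if "x \<in> W" for x
  proof (cases "x = 0")
    case True thus ?thesis by (simp add: qform_def)
  next
    case False
    have "(1 / norm x) *\<^sub>R x \<in> K" using that False Wsc unfolding K_def by auto
    hence "g ((1 / norm x) *\<^sub>R x) \<le> l" using vmax l_def by blast
    hence "(1 / norm x)^2 * Re (qform A x) \<le> l" unfolding g_def qform_scaleR by simp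
    hence "(1 / norm x)^2 * Re (qform A x) * (norm x)^2 \<le> l * (norm x)^2"
      by (simp add: mult_right_mono)
    thus ?thesis using False by (simp add: field_simps)
  qed
  define B where "B = mat (complex_of_real l) - A"
  have hB: "cadjoint B = B" unfolding B_def by (simp add: cadjoint_diff cadjoint_mat_real herm)
  have qB: "Re (qform B x) = l * (norm x)^2 - Re (qform A x)" for x
    unfolding B_def qform_cinner
    by (simp add: matrix_vector_mult_diff_rdistrib mat_mult_vec cinner_diff_right
        cinner_scale_right cinner_self)
  have nn: "Re (qform B (v + s *s w)) \<ge> 0" if "w \<in> W" for s w
    using bound[of "v + s *s w"] qB[of "v + s *s w"] Wadd[OF vW Wsm[OF that]] by simp
  have z0: "Re (qform B v) = 0" using qB[of v] nv unfolding l_def g_def by simp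
  have orth: "cinner w (B *v v) = 0" if "w \<in> W" for w
    by (rule var_lemma[OF hB nn[OF that] z0])
  have AvW: "A *v v \<in> W"
    unfolding W_def
  proof (intro CollectI ballI)
    fix i assume i: "i \<in> J"
    have "cinner (u i) (A *v v) = cinner (A *v u i) v" by (rule herm_cinner[OF herm])
    also have "\<dots> = 0" using eig[OF i] vW i by (simp add: cinner_scale_left W_def)
    finally show "cinner (u i) (A *v v) = 0" .
  qed
  have BvW: "B *v v \<in> W"
    unfolding B_def using AvW vW
    by (simp add: matrix_vector_mult_diff_rdistrib mat_mult_vec W_def cinner_diff_right
        cinner_scale_right)
  have "B *v v = 0" using orth[OF BvW] by simp
  hence "A *v v = complex_of_real l *s v"
    unfolding B_def by (simp add: matrix_vector_mult_diff_rdistrib mat_mult_vec)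
  moreover have "cinner v v = 1" using nv by (simp add: cinner_self)
  moreover have "\<forall>i\<in>J. cinner (u i) v = 0" using vW unfolding W_def by blast
  ultimately show ?thesis by blast
qed

lemma eigen_family:
  fixes A :: "complex^'n^'n" and J :: "'n set"
  assumes herm: "cadjoint A = A" and fin: "finite J"
  shows "\<exists>u d. (\<forall>i\<in>J. \<forall>j\<in>J. cinner (u i) (u j) = (if i = j then 1 else 0)) \<and>
               (\<forall>i\<in>J. A *v u i = complex_of_real (d i) *s u i)"
  using fin
proof (induction J rule: finite_induct)
  case empty thus ?case by auto
next
  case (insert j0 J)
  then obtain u d where o: "\<forall>i\<in>J. \<forall>j\<in>J. cinner (u i) (u j) = (if i = j then 1 else 0)"
    and e: "\<forall>i\<in>J. A *v u i = complex_of_real (d i) *s u i" by blast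
  obtain v l where v: "cinner v v = 1" "\<forall>i\<in>J. cinner (u i) v = 0" "A *v v = complex_of_real l *s v"
    using new_eigvec[OF herm insert(2), of u d] e by blast
  have v2: "\<forall>i\<in>J. cinner v (u i) = 0" using v(2) cinner_commute by (metis complex_cnj_zero)
  show ?case
    apply (rule exI[of _ "u(j0 := v)"], rule exI[of _ "d(j0 := l)"])
    using o e v v2 insert(2) by auto
qed

lemma spectral:
  fixes A :: "complex^'n^'n"
  assumes herm: "cadjoint A = A"
  shows "\<exists>(U::complex^'n^'n) d. cadjoint U ** U = mat 1 \<and> U ** cadjoint U = mat 1 \<and> A = U ** diagm d ** cadjoint U"
proof -
  have fin: "finite (UNIV :: 'n set)" by simp
  obtain u :: "'n \<Rightarrow> complex^'n" and d :: "'n \<Rightarrow> real" where o0: "\<forall>i\<in>UNIV. \<forall>j\<in>UNIV. cinner (u i) (u j) = (if i = j then 1 else 0)"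
    and e0: "\<forall>i\<in>UNIV. A *v u i = complex_of_real (d i) *s u i"
    using eigen_family[OF herm fin] by blast
  have o: "\<And>i j. cinner (u i) (u j) = (if i = j then 1 else 0)" using o0 by blast
  have e: "\<And>i. A *v u i = complex_of_real (d i) *s u i" using e0 by blast
  define U where "U = (\<chi> i j. u j $ i)"
  have 1: "cadjoint U ** U = mat 1"
    using o by (simp add: vec_eq_iff U_def matrix_matrix_mult_def mat_def cinner_def)
  hence 2: "U ** cadjoint U = mat 1" using matrix_left_right_inverse by blast
  have "A ** U = U ** diagm d"
  proof -
    have "(A ** U) $ i $ j = (U ** diagm d) $ i $ j" for i j
    proof -
      have "(A ** U) $ i $ j = (A *v u j) $ i"
        by (simp add: U_def matrix_matrix_mult_def matrix_vector_mult_def)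
      also have "\<dots> = complex_of_real (d j) * u j $ i" using e by simp
      also have "\<dots> = (U ** diagm d) $ i $ j"
        by (simp add: U_def matrix_matrix_mult_def diagm_def if_distrib if_distribR cong: if_cong)
      finally show ?thesis .
    qed
    thus ?thesis by (simp add: vec_eq_iff)
  qed
  hence "A = U ** diagm d ** cadjoint U"
    by (metis 2 matrix_mul_assoc matrix_mul_rid)
  thus ?thesis using 1 2 by blast
qed

definition unitary :: "complex^'n^'n \<Rightarrow> bool" where
  "unitary U \<longleftrightarrow> cadjoint U ** U = mat 1 \<and> U ** cadjoint U = mat 1"

definition udu :: "complex^'n^'n \<Rightarrow> ('n \<Rightarrow> real) \<Rightarrow> complex^'n^'n" where
  "udu U d = U ** diagm d ** cadjoint U"

lemma spectral_udu: "cadjoint A = A \<Longrightarrow> \<exists>U d. unitary U \<and> A = udu U d"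
  using spectral unfolding unitary_def udu_def by blast

lemma diagm_mult: "diagm a ** diagm b = diagm (\<lambda>i. a i * b i)"
proof -
  have "(\<Sum>k\<in>UNIV. (if i = k then complex_of_real (a i) else 0) * (if k = j then complex_of_real (b k) else 0))
        = (if i = j then complex_of_real (a i * b i) else 0)" for i j
  proof -
    have "(\<Sum>k\<in>UNIV. (if i = k then complex_of_real (a i) else 0) * (if k = j then complex_of_real (b k) else 0))
        = (\<Sum>k\<in>UNIV. if k = i then (if i = j then complex_of_real (a i * b i) else 0) else 0)"
      by (intro sum.cong refl) auto
    also have "\<dots> = (if i = j then complex_of_real (a i * b i) else 0)" by simp
    finally show ?thesis .
  qed
  thus ?thesis unfolding vec_eq_iff diagm_def matrix_matrix_mult_def by simp
qed

lemma diagm_one: "diagm (\<lambda>_. 1) = mat 1"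
  by (simp add: vec_eq_iff diagm_def mat_def)

lemma diagm_zero: "diagm (\<lambda>_. 0) = 0"
  by (simp add: vec_eq_iff diagm_def)

lemma udu_mult: "unitary U \<Longrightarrow> udu U a ** udu U b = udu U (\<lambda>i. a i * b i)"
proof -
  assume u: "unitary U"
  have "udu U a ** udu U b = U ** diagm a ** (cadjoint U ** U) ** diagm b ** cadjoint U"
    unfolding udu_def by (simp add: matrix_mul_assoc)
  also have "\<dots> = udu U (\<lambda>i. a i * b i)"
    using u unfolding unitary_def udu_def by (simp add: diagm_mult matrix_mul_assoc[symmetric])
  finally show ?thesis .
qed

lemma udu_one: "unitary U \<Longrightarrow> udu U (\<lambda>_. 1) = mat 1"
  unfolding udu_def unitary_def by (simp add: diagm_one)

lemma udu_herm: "cadjoint (udu U d) = udu U d"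
  unfolding udu_def by (simp add: cadjoint_mult matrix_mul_assoc)

lemma udu_zero: "udu U (\<lambda>_. 0) = 0"
  unfolding udu_def by (simp add: diagm_zero)

lemma qform_congr: "qform (cadjoint C ** M ** C) x = qform M (C *v x)"
  unfolding qform_cinner
  by (simp add: matrix_vector_mul_assoc[symmetric] cinner_adj[of x "cadjoint C"])

lemma qform_udu: "qform (udu U d) x = qform (diagm d) (cadjoint U *v x)"
  using qform_congr[of "cadjoint U" "diagm d" x] unfolding udu_def by simp

lemma qform_diagm: "qform (diagm d) y = (\<Sum>i\<in>UNIV. complex_of_real (d i * (cmod (y$i))^2))"
  unfolding qform_def
  by (intro sum.cong refl)
     (simp add: matrix_vector_mult_def diagm_def if_distrib if_distribR cnj_mult_self[symmetric] mult_ac cong: if_cong)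

lemma qform_diagm_axis: "qform (diagm d) (axis k 1) = complex_of_real (d k)"
  unfolding qform_diagm by (simp add: axis_def if_distrib if_distribR cong: if_cong)

lemma unitary_inj: "unitary U \<Longrightarrow> U *v x = 0 \<Longrightarrow> x = 0"
proof -
  assume u: "unitary U" and z: "U *v x = 0"
  have "x = (cadjoint U ** U) *v x" using u unfolding unitary_def by simp
  also have "\<dots> = cadjoint U *v (U *v x)" by (simp add: matrix_vector_mul_assoc)
  finally show "x = 0" using z by simp
qed

lemma unitary_adj: "unitary U \<Longrightarrow> unitary (cadjoint U)"
  unfolding unitary_def by simp

lemma psd_udu: "(\<And>i. d i \<ge> 0) \<Longrightarrow> pos_semidef (udu U d)"
  unfolding pos_semidef_def
  by (simp add: udu_herm qform_udu qform_diagm sum_nonneg)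

lemma pd_udu:
  fixes U :: "complex^'n^'n"
  assumes u: "unitary U" and d: "\<And>i. d i > 0"
  shows "pos_def (udu U d)"
  unfolding pos_def_def
proof (intro conjI allI impI)
  show "cadjoint (udu U d) = udu U d" by (rule udu_herm)
  fix x :: "complex^'n" assume x: "x \<noteq> 0"
  show "Im (qform (udu U d) x) = 0" by (simp add: qform_udu qform_diagm)
  define y where "y = cadjoint U *v x"
  have "y \<noteq> 0" using unitary_inj[OF unitary_adj[OF u]] x unfolding y_def by blast
  then obtain k where k: "y $ k \<noteq> 0" by (auto simp: vec_eq_iff)
  have "Re (qform (udu U d) x) = (\<Sum>i\<in>UNIV. d i * (cmod (y$i))^2)"
    by (simp add: qform_udu qform_diagm y_def)
  also have "\<dots> > 0"
  proof (rule sum_pos2[where i=k])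
    show "0 < d k * (cmod (y $ k))\<^sup>2" using d k by simp
    show "\<And>i. i \<in> UNIV \<Longrightarrow> 0 \<le> d i * (cmod (y $ i))\<^sup>2" using d by (simp add: less_imp_le)
  qed auto
  finally show "Re (qform (udu U d) x) > 0" .
qed

lemma udu_eig_qform:
  assumes u: "unitary U"
  shows "qform (udu U d) (U *v axis k 1) = complex_of_real (d k)"
  using u unfolding qform_udu unitary_def
  by (simp add: matrix_vector_mul_assoc qform_diagm_axis)

lemma psd_udu_nonneg: "unitary U \<Longrightarrow> pos_semidef (udu U d) \<Longrightarrow> d k \<ge> 0"
proof -
  assume u: "unitary U" and p: "pos_semidef (udu U d)"
  have "Re (qform (udu U d) (U *v axis k 1)) \<ge> 0" using p unfolding pos_semidef_def by blast
  thus ?thesis using udu_eig_qform[OF u, of d k] by simp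
qed

lemma pd_udu_pos: "unitary U \<Longrightarrow> pos_def (udu U d) \<Longrightarrow> d k > 0"
proof -
  assume u: "unitary U" and p: "pos_def (udu U d)"
  have "U *v axis k 1 \<noteq> 0"
  proof
    assume "U *v axis k 1 = 0"
    hence "axis k (1::complex) = 0" by (rule unitary_inj[OF u])
    thus False by simp
  qed
  hence "Re (qform (udu U d) (U *v axis k 1)) > 0" using p unfolding pos_def_def by blast
  thus ?thesis using udu_eig_qform[OF u, of d k] by simp
qed

lemma pd_psd: "pos_def (A::complex^'n^'n) \<Longrightarrow> pos_semidef A"
  unfolding pos_def_def pos_semidef_def
proof (intro conjI allI)
  assume a: "cadjoint A = A \<and> (\<forall>x. x \<noteq> 0 \<longrightarrow> Im (qform A x) = 0 \<and> 0 < Re (qform A x))"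
  show "cadjoint A = A" using a by blast
  fix x :: "complex^'n"
  show "Im (qform A x) = 0" "0 \<le> Re (qform A x)"
    using a by (cases "x = 0"; force simp: qform_cinner)+
qed

lemma udu_eigvec:
  assumes u: "unitary U"
  shows "udu U d *v (U *v axis k 1) = complex_of_real (d k) *s (U *v axis k 1)"
proof -
  have "udu U d *v (U *v axis k 1) = U *v (diagm d *v axis k 1)"
    using u unfolding udu_def unitary_def
    by (simp add: matrix_vector_mul_assoc matrix_mul_assoc[symmetric])
  also have "diagm d *v axis k 1 = complex_of_real (d k) *s axis k 1"
  proof -
    have "(\<Sum>j\<in>UNIV. (if i = j then complex_of_real (d i) else 0) * (if j = k then 1 else 0))
        = (if i = k then complex_of_real (d k) else 0)" for i
    proof -
      have "(\<Sum>j\<in>UNIV. (if i = j then complex_of_real (d i) else 0) * (if j = k then 1 else 0))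
          = (\<Sum>j\<in>UNIV. if j = i then (if i = k then complex_of_real (d k) else 0) else 0)"
        by (intro sum.cong refl) auto
      also have "\<dots> = (if i = k then complex_of_real (d k) else 0)" by simp
      finally show ?thesis .
    qed
    thus ?thesis unfolding vec_eq_iff diagm_def matrix_vector_mult_def axis_def by simp
  qed
  finally show ?thesis by (simp add: vector_scalar_commute)
qed

lemma unitary_cinner: "unitary U \<Longrightarrow> cinner (U *v a) (U *v b) = cinner a b"
  unfolding unitary_def by (simp add: cinner_adj matrix_vector_mul_assoc)

lemma sqrt_unique:
  assumes B: "pos_semidef B" and C: "pos_semidef C" and eq: "B ** B = C ** C"
  shows "B = C"
proof -
  define D where "D = B - C"
  have hB: "cadjoint B = B" and hC: "cadjoint C = C"
    using B C by (auto simp: pos_semidef_def)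
  have hD: "cadjoint D = D" unfolding D_def by (simp add: cadjoint_diff hB hC)
  obtain V m where V: "unitary V" and Dm: "D = udu V m" using spectral_udu[OF hD] by blast
  have m0: "m k = 0" for k
  proof (rule ccontr)
    assume mk: "m k \<noteq> 0"
    define v where "v = V *v axis k 1"
    have Dv: "D *v v = complex_of_real (m k) *s v" unfolding v_def Dm by (rule udu_eigvec[OF V])
    have vv: "cinner v v = 1" unfolding v_def unitary_cinner[OF V]
      by (simp add: cinner_def axis_def if_distrib if_distribR cong: if_cong)
    have sum0: "B *v (D *v v) + D *v (C *v v) = 0"
    proof -
      have "B *v (D *v v) + D *v (C *v v) = B *v (B *v v) - C *v (C *v v)"
        unfolding D_def by (simp add: matrix_vector_mult_diff_rdistrib matrix_vector_mult_diff_distrib)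
      also have "\<dots> = (B ** B) *v v - (C ** C) *v v" by (simp add: matrix_vector_mul_assoc)
      finally show ?thesis using eq by simp
    qed
    have "cinner v (B *v (D *v v)) = complex_of_real (m k) * qform B v"
      by (simp add: Dv vector_scalar_commute cinner_scale_right qform_cinner)
    moreover have "cinner v (D *v (C *v v)) = complex_of_real (m k) * qform C v"
      by (simp add: herm_cinner[OF hD] Dv cinner_scale_left qform_cinner)
    ultimately have "complex_of_real (m k) * (qform B v + qform C v) = 0"
      using arg_cong[OF sum0, of "cinner v"] by (simp add: cinner_add_right algebra_simps)
    hence "qform B v + qform C v = 0" using mk by simp
    hence "Re (qform B v + qform C v) = 0" by simp
    hence "Re (qform B v) + Re (qform C v) = 0" by simp
    moreover have "Re (qform B v) \<ge> 0" "Re (qform C v) \<ge> 0"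
      using B C by (auto simp: pos_semidef_def)
    ultimately have "Re (qform B v) = 0" "Re (qform C v) = 0" by linarith+
    hence "B *v v = 0" "C *v v = 0" using psd_kernel B C by blast+
    hence "D *v v = 0" unfolding D_def by (simp add: matrix_vector_mult_diff_rdistrib)
    hence "complex_of_real (m k) *s v = 0" using Dv by simp
    hence "cinner v (complex_of_real (m k) *s v) = 0" by (simp only: cinner_zero_right)
    hence "complex_of_real (m k) * cinner v v = 0" by (simp add: cinner_scale_right)
    thus False using vv mk by simp
  qed
  have "m = (\<lambda>_. 0)" using m0 by (simp add: fun_eq_iff)
  hence "D = 0" unfolding Dm by (simp add: udu_zero)
  thus ?thesis unfolding D_def by simp
qed

lemma sqrt_exists: "pos_semidef A \<Longrightarrow> \<exists>B. pos_semidef B \<and> B ** B = A"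
proof -
  assume A: "pos_semidef A"
  obtain U d where U: "unitary U" and Ad: "A = udu U d"
    using spectral_udu A unfolding pos_semidef_def by blast
  have d: "d k \<ge> 0" for k using psd_udu_nonneg U A Ad by blast
  have "udu U (\<lambda>i. sqrt (d i)) ** udu U (\<lambda>i. sqrt (d i)) = A"
    using d by (simp add: udu_mult[OF U] Ad)
  moreover have "pos_semidef (udu U (\<lambda>i. sqrt (d i)))" by (rule psd_udu) (simp add: d)
  ultimately show ?thesis by blast
qed

lemma msqrt: "pos_semidef A \<Longrightarrow> pos_semidef (msqrt A) \<and> msqrt A ** msqrt A = A"
proof -
  assume A: "pos_semidef A"
  have "\<exists>!B. pos_semidef B \<and> B ** B = A"
  proof (rule ex_ex1I)
    show "\<exists>B. pos_semidef B \<and> B ** B = A" by (rule sqrt_exists[OF A])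
    show "B = C" if "pos_semidef B \<and> B ** B = A" "pos_semidef C \<and> C ** C = A" for B C
      using that sqrt_unique by auto
  qed
  thus ?thesis unfolding msqrt_def by (rule theI')
qed

lemma sq_psd: "pos_semidef B \<Longrightarrow> pos_semidef (B ** B)"
proof -
  assume B: "pos_semidef B"
  obtain U d where U: "unitary U" and Bd: "B = udu U d"
    using spectral_udu B unfolding pos_semidef_def by blast
  show ?thesis unfolding Bd udu_mult[OF U] by (rule psd_udu) simp
qed

lemma msqrt_eq: "pos_semidef B \<Longrightarrow> B ** B = A \<Longrightarrow> msqrt A = B"
proof -
  assume B: "pos_semidef B" and A: "B ** B = A"
  have "pos_semidef A" using sq_psd[OF B] A by simp
  hence "pos_semidef (msqrt A) \<and> msqrt A ** msqrt A = A" by (rule msqrt)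
  thus ?thesis using sqrt_unique[OF _ B] A by auto
qed

lemma msqrt_udu: "unitary U \<Longrightarrow> (\<And>i. d i \<ge> 0) \<Longrightarrow> msqrt (udu U d) = udu U (\<lambda>i. sqrt (d i))"
  by (rule msqrt_eq) (auto intro!: psd_udu simp: udu_mult)

lemma matrix_inv_eq:
  fixes A B :: "complex^'n^'n"
  assumes "A ** B = mat 1"
  shows "matrix_inv A = B"
proof -
  have BA: "B ** A = mat 1" using assms matrix_left_right_inverse by blast
  have "A ** matrix_inv A = mat 1 \<and> matrix_inv A ** A = mat 1"
    unfolding matrix_inv_def by (rule someI[of _ B]) (use assms BA in auto)
  hence "matrix_inv A ** A = mat 1" by blast
  hence "matrix_inv A = matrix_inv A ** (A ** B)" using assms by simp
  also have "\<dots> = B" by (simp add: matrix_mul_assoc \<open>matrix_inv A ** A = mat 1\<close>)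
  finally show ?thesis .
qed

lemma inv_cancel: "(A::complex^'n^'n) ** B = mat 1 \<Longrightarrow> A ** (B ** C) = C"
  by (simp add: matrix_mul_assoc)

lemma udu_mult_assoc: "unitary U \<Longrightarrow> udu U a ** (udu U b ** C) = udu U (\<lambda>i. a i * b i) ** C"
  by (simp add: matrix_mul_assoc udu_mult)

lemma udu_inv: "unitary U \<Longrightarrow> (\<And>i. d i \<noteq> 0) \<Longrightarrow> udu U d ** udu U (\<lambda>i. 1 / d i) = mat 1"
  by (simp add: udu_mult udu_one)

lemma pd_decomp: "pos_def A \<Longrightarrow> \<exists>U d. unitary U \<and> A = udu U d \<and> (\<forall>i. d i > 0)"
  using spectral_udu pd_udu_pos unfolding pos_def_def by metis

lemma diagm_add: "diagm a + diagm b = diagm (\<lambda>i. a i + b i)"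
  by (simp add: vec_eq_iff diagm_def)
lemma diagm_diff: "diagm a - diagm b = diagm (\<lambda>i. a i - b i)"
  by (simp add: vec_eq_iff diagm_def)
lemma diagm_scaleR: "c *\<^sub>R diagm a = diagm (\<lambda>i. c * a i)"
  by (simp add: vec_eq_iff diagm_def del: vector_scaleR_component)

lemma matrix_diff_ldistrib: "(A::complex^'n^'m) ** (B - C) = A ** B - A ** C"
  by (simp add: vec_eq_iff matrix_matrix_mult_def right_diff_distrib sum_subtractf)
lemma matrix_diff_rdistrib: "((B::complex^'n^'m) - C) ** A = B ** A - C ** A"
  by (simp add: vec_eq_iff matrix_matrix_mult_def left_diff_distrib sum_subtractf)
lemma matrix_add_rdistrib': "((B::complex^'n^'m) + C) ** A = B ** A + C ** A"
  by (simp add: vec_eq_iff matrix_matrix_mult_def distrib_right sum.distrib)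

lemma udu_diff: "udu U a - udu U b = udu U (\<lambda>i. a i - b i)"
  unfolding udu_def by (simp add: matrix_diff_ldistrib[symmetric] matrix_diff_rdistrib[symmetric] diagm_diff)

lemma udu_scaleR: "c *\<^sub>R udu U a = udu U (\<lambda>i. c * a i)"
proof -
  have "c *\<^sub>R udu U a = (c *\<^sub>R (U ** diagm a)) ** cadjoint U"
    unfolding udu_def by (rule scalar_matrix_assoc)
  also have "c *\<^sub>R (U ** diagm a) = U ** (c *\<^sub>R diagm a)"
    by (simp add: matrix_scalar_ac scalar_matrix_assoc)
  finally show ?thesis unfolding udu_def diagm_scaleR .
qed

lemma qform_add: "qform (A + B) x = qform A x + qform B x"
  unfolding qform_cinner by (simp add: matrix_vector_mult_add_rdistrib cinner_add_right)

lemma qform_scaleR_mat: "qform (c *\<^sub>R A) x = complex_of_real c * qform A x"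
  unfolding qform_def by (simp add: matrix_vector_mult_def sum_distrib_left mult_ac) (simp add: scaleR_conv_of_real)

lemma psd_congr: "pos_semidef M \<Longrightarrow> pos_semidef (cadjoint C ** M ** C)"
  unfolding pos_semidef_def by (simp add: qform_congr cadjoint_mult matrix_mul_assoc)

lemma pd_congr:
  fixes M C Ci :: "complex^'n^'n"
  assumes M: "pos_def M" and CC: "Ci ** C = mat 1"
  shows "pos_def (cadjoint C ** M ** C)"
  unfolding pos_def_def
proof (intro conjI allI impI)
  show "cadjoint (cadjoint C ** M ** C) = cadjoint C ** M ** C"
    using M by (simp add: pos_def_def cadjoint_mult matrix_mul_assoc)
  fix x :: "complex^'n" assume x: "x \<noteq> 0"
  have "C *v x \<noteq> 0"
  proof
    assume "C *v x = 0"
    hence "Ci *v (C *v x) = 0" by simp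
    thus False using x CC by (simp add: matrix_vector_mul_assoc)
  qed
  thus "Im (qform (cadjoint C ** M ** C) x) = 0" "Re (qform (cadjoint C ** M ** C) x) > 0"
    using M unfolding qform_congr pos_def_def by auto
qed

lemma joint_diag:
  fixes X Y :: "complex^'n^'n" and t :: real
  assumes X: "pos_def X" and Y: "pos_def Y" and t: "0 \<le> t" "t \<le> 1"
    and sum: "(1 - t) *\<^sub>R X + t *\<^sub>R Y = mat 1"
  shows "\<exists>V x y. unitary V \<and> X = udu V x \<and> Y = udu V y \<and> (\<forall>i. x i > 0) \<and> (\<forall>i. y i > 0)"
proof (cases "t = 0")
  case True
  hence X1: "X = mat 1" using sum by simp
  obtain V y where V: "unitary V" "Y = udu V y" "\<forall>i. y i > 0" using pd_decomp[OF Y] by blast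
  have "X = udu V (\<lambda>_. 1)" using X1 udu_one[OF V(1)] by simp
  thus ?thesis using V by (intro exI[of _ V] exI[of _ "\<lambda>_. 1"] exI[of _ y]) auto
next
  case False
  hence tp: "t > 0" using t by simp
  obtain V x where V: "unitary V" "X = udu V x" "\<forall>i. x i > 0" using pd_decomp[OF X] by blast
  have "t *\<^sub>R Y = mat 1 - (1 - t) *\<^sub>R X" using sum by (simp add: algebra_simps)
  also have "\<dots> = udu V (\<lambda>i. 1 - (1 - t) * x i)"
    using V(2) by (simp add: udu_scaleR udu_diff udu_one[OF V(1), symmetric])
  finally have "(1/t) *\<^sub>R (t *\<^sub>R Y) = (1/t) *\<^sub>R udu V (\<lambda>i. 1 - (1 - t) * x i)" by simp
  hence Yd: "Y = udu V (\<lambda>i. (1/t) * (1 - (1 - t) * x i))" using tp by (simp add: udu_scaleR)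
  have "\<forall>i. (1/t) * (1 - (1 - t) * x i) > 0"
    using pd_udu_pos[OF V(1)] Y Yd by blast
  thus ?thesis using V Yd by blast
qed

theorem mainTheorem12:
  fixes P Q R :: "complex^'n^'n" and t :: real
  assumes "pos_def P" and "pos_def Q"
    and "0 \<le> t" and "t \<le> 1"
    and "R = matrix_inv ((1 - t) *\<^sub>R P + t *\<^sub>R Q)"
  shows "gen_fidelity R P Q = matsumoto_fidelity P Q"
proof -
  note PD = assms(1) and QD = assms(2) and t = assms(3,4)
  define S where "S = (1 - t) *\<^sub>R P + t *\<^sub>R Q"
  have hP: "cadjoint P = P" and hQ: "cadjoint Q = Q" using PD QD by (auto simp: pos_def_def)
  have SD: "pos_def S"
    unfolding pos_def_def
  proof (intro conjI allI impI)
    show "cadjoint S = S" unfolding S_def by (simp add: cadjoint_add cadjoint_scaleR hP hQ)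
    fix x :: "complex^'n" assume x: "x \<noteq> 0"
    have q: "qform S x = complex_of_real (1 - t) * qform P x + complex_of_real t * qform Q x"
      unfolding S_def by (simp add: qform_add qform_scaleR_mat)
    have a: "Im (qform P x) = 0" "Re (qform P x) > 0" and b: "Im (qform Q x) = 0" "Re (qform Q x) > 0"
      using PD QD x by (auto simp: pos_def_def)
    show "Im (qform S x) = 0" using q a b by simp
    have "Re (qform S x) = (1 - t) * Re (qform P x) + t * Re (qform Q x)" using q a b by simp
    moreover have "(1 - t) * Re (qform P x) \<ge> 0" "t * Re (qform Q x) \<ge> 0" using a b t by auto
    moreover have "t = 0 \<Longrightarrow> (1 - t) * Re (qform P x) > 0" using a by simp
    moreover have "t \<noteq> 0 \<Longrightarrow> t * Re (qform Q x) > 0" using b t by simp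
    ultimately show "Re (qform S x) > 0" by linarith
  qed
  obtain U s where U: "unitary U" and Ss: "S = udu U s" and s: "\<And>i. s i > 0"
    using pd_decomp[OF SD] by blast
  have s0: "s i \<noteq> 0" for i using s[of i] by simp
  have RS: "R = udu U (\<lambda>i. 1 / s i)"
    using assms(5) matrix_inv_eq[OF udu_inv[OF U s0]] Ss S_def by simp
  have invR: "matrix_inv R = S"
    unfolding RS Ss by (rule matrix_inv_eq) (simp add: udu_mult[OF U] s0 udu_one[OF U])
  define r where "r = udu U (\<lambda>i. sqrt (1 / s i))"
  define ri where "ri = udu U (\<lambda>i. sqrt (s i))"
  have r: "msqrt R = r" unfolding RS r_def using s by (simp add: msqrt_udu[OF U] less_imp_le)
  have hr: "cadjoint r = r" and hri: "cadjoint ri = ri" unfolding r_def ri_def by (simp_all add: udu_herm)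
  have rri: "r ** ri = mat 1" and rir: "ri ** r = mat 1"
    unfolding r_def ri_def using s by (simp_all add: udu_mult[OF U] udu_one[OF U] real_sqrt_mult[symmetric] s0)
  have riri: "ri ** ri = S"
    unfolding ri_def Ss using s by (simp add: udu_mult[OF U] less_imp_le)
  have rSr: "r ** S ** r = mat 1"
    unfolding r_def Ss using s by (simp add: udu_mult[OF U] udu_one[OF U] real_sqrt_divide abs_of_pos[OF s] s0)
  define X where "X = r ** P ** r"
  define Y where "Y = r ** Q ** r"
  have XD: "pos_def X" unfolding X_def using pd_congr[OF PD rir] hr by simp
  have YD: "pos_def Y" unfolding Y_def using pd_congr[OF QD rir] hr by simp
  have sumXY: "(1 - t) *\<^sub>R X + t *\<^sub>R Y = mat 1"
  proof -
    have "(1 - t) *\<^sub>R X + t *\<^sub>R Y = r ** S ** r"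
      unfolding X_def Y_def S_def
      by (simp add: matrix_add_ldistrib matrix_add_rdistrib' scalar_matrix_assoc matrix_scalar_ac)
    thus ?thesis using rSr by simp
  qed
  obtain V x y where V: "unitary V" and Xx: "X = udu V x" and Yy: "Y = udu V y"
    and x: "\<And>i. x i > 0" and y: "\<And>i. y i > 0"
    using joint_diag[OF XD YD t sumXY] by blast
  have x0: "x i \<noteq> 0" for i using x[of i] by simp
  have y0: "y i \<noteq> 0" for i using y[of i] by simp
  define sX where "sX = udu V (\<lambda>i. sqrt (x i))"
  define sY where "sY = udu V (\<lambda>i. sqrt (y i))"
  have msX: "msqrt X = sX" unfolding Xx sX_def using x by (simp add: msqrt_udu[OF V] less_imp_le)
  have msY: "msqrt Y = sY" unfolding Yy sY_def using y by (simp add: msqrt_udu[OF V] less_imp_le)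
  have comm: "sY ** sX = sX ** sY" unfolding sX_def sY_def by (simp add: udu_mult[OF V] mult.commute)
  have LHS: "gen_fidelity R P Q = trace (sX ** sY ** S)"
  proof -
    have "gen_fidelity R P Q = trace (sX ** S ** sY)"
      unfolding gen_fidelity_def r invR using msX msY X_def Y_def by simp
    also have "\<dots> = trace (sY ** (sX ** S))" by (rule trace_mul_sym)
    also have "\<dots> = trace (sX ** sY ** S)" by (simp add: matrix_mul_assoc comm)
    finally show ?thesis .
  qed
  obtain W pp where W: "unitary W" and Pp: "P = udu W pp" and pp: "\<And>i. pp i > 0"
    using pd_decomp[OF PD] by blast
  have pp0: "pp i \<noteq> 0" for i using pp[of i] by simp
  define p where "p = udu W (\<lambda>i. sqrt (pp i))"
  define pi where "pi = udu W (\<lambda>i. 1 / sqrt (pp i))"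
  define Pinv where "Pinv = udu W (\<lambda>i. 1 / pp i)"
  have mp: "msqrt P = p" unfolding Pp p_def using pp by (simp add: msqrt_udu[OF W] less_imp_le)
  have ppi: "p ** pi = mat 1" and pip: "pi ** p = mat 1"
    unfolding p_def pi_def using pp by (simp_all add: udu_mult[OF W] udu_one[OF W] pp0)
  have mpi: "matrix_inv p = pi" by (rule matrix_inv_eq[OF ppi])
  have pipi: "pi ** pi = Pinv" unfolding pi_def Pinv_def using pp
    by (simp add: udu_mult[OF W] real_sqrt_mult[symmetric] abs_of_pos[OF pp])
  have PPinv: "P ** Pinv = mat 1" unfolding Pp Pinv_def using pp
    by (simp add: udu_mult[OF W] udu_one[OF W] pp0)
  have hpi: "cadjoint pi = pi" unfolding pi_def by (simp add: udu_herm)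
  define M where "M = pi ** Q ** pi"
  define H where "H = sX ** sY"
  have Hd: "H = udu V (\<lambda>i. sqrt (x i) * sqrt (y i))" unfolding H_def sX_def sY_def by (simp add: udu_mult[OF V])
  define G where "G = ri ** H ** ri"
  have Hpsd: "pos_semidef H" unfolding Hd
    by (rule psd_udu) (simp add: x y less_imp_le)
  have Gpsd: "pos_semidef G"
    unfolding G_def using psd_congr[OF Hpsd, of ri] hri by simp
  have K: "pos_semidef (pi ** G ** pi)" using psd_congr[OF Gpsd, of pi] hpi by simp
  define Z where "Z = ri ** Pinv ** ri"
  define Xi where "Xi = udu V (\<lambda>i. 1 / x i)"
  have XZ: "X ** Z = mat 1"
  proof -
    have "X ** Z = r ** (P ** (r ** ri) ** Pinv) ** ri" unfolding X_def Z_def by (simp add: matrix_mul_assoc)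
    also have "\<dots> = mat 1" using rri PPinv by simp
    finally show ?thesis .
  qed
  have XiX: "Xi ** X = mat 1" unfolding Xi_def Xx using x by (simp add: udu_mult[OF V] udu_one[OF V] x0)
  have ZXi: "Z = Xi"
  proof -
    have "Z = (Xi ** X) ** Z" using XiX by simp
    also have "\<dots> = Xi" using XZ by (simp add: matrix_mul_assoc[symmetric])
    finally show ?thesis .
  qed
  have HZH: "H ** Z ** H = Y"
    unfolding Hd ZXi Xi_def Yy using x y
    by (simp add: udu_mult[OF V] field_simps real_sqrt_mult[symmetric] abs_mult abs_of_pos[OF x] abs_of_pos[OF y] x0)
  have GPG: "G ** Pinv ** G = Q"
  proof -
    have "G ** Pinv ** G = ri ** (H ** Z ** H) ** ri" unfolding G_def Z_def by (simp add: matrix_mul_assoc)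
    also have "\<dots> = ri ** r ** Q ** (r ** ri)" unfolding HZH Y_def by (simp add: matrix_mul_assoc)
    also have "\<dots> = Q" using rir rri by simp
    finally show ?thesis .
  qed
  have sq: "(pi ** G ** pi) ** (pi ** G ** pi) = M"
  proof -
    have "(pi ** G ** pi) ** (pi ** G ** pi) = pi ** (G ** (pi ** pi) ** G) ** pi"
      by (simp add: matrix_mul_assoc)
    also have "\<dots> = M" unfolding pipi GPG M_def ..
    finally show ?thesis .
  qed
  have mM: "msqrt M = pi ** G ** pi" by (rule msqrt_eq[OF K sq])
  have "mgeo P Q = p ** (pi ** G ** pi) ** p"
    unfolding mgeo_def mp mpi using mM M_def by simp
  also have "\<dots> = (p ** pi) ** G ** (pi ** p)" by (simp add: matrix_mul_assoc)
  also have "\<dots> = G" using ppi pip by simp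
  finally have mg: "mgeo P Q = G" .
  have "trace G = trace (ri ** (H ** ri))" unfolding G_def by (simp add: matrix_mul_assoc)
  also have "\<dots> = trace ((H ** ri) ** ri)" by (rule trace_mul_sym)
  also have "\<dots> = trace (sX ** sY ** S)" unfolding H_def by (simp add: matrix_mul_assoc[symmetric] riri)
  finally have "trace G = trace (sX ** sY ** S)" .
  thus ?thesis unfolding LHS matsumoto_fidelity_def mg by simp
qed

end
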